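(* For all $x, e \in \mathcal{P}$ we have $x \in \ell_e$ if and only if $e \in \ell_{x^{q/2}}$.
   Context: Let $q = 2^m$, let $E = \mathbb{F}_{q^4}$, and define $\mathcal{P} = \{x \in E \mid x^{q^3+q^2+q+1} = 1\}$. For $e \in \mathcal{P}$, let $$\ell_e = \{x \in \mathcal{P} \mid x^{q+1} + (e^{q^2+q+2} + e^{q+1})x + e^2 = 0\}.$$ *)

theory Defs
  imports Main
begin

text \<open>Here E is modelled as a finite field type 'a of cardinality q^4, q = 2^m.
  calP q is the set of x with x^(q^3+q^2+q+1) = 1, and ell q e is the line l_e.\<close>

definition calP :: "nat \<Rightarrow> 'a::field set" where
  "calP q = {x. x ^ (q^3 + q^2 + q + 1) = 1}"

definition ell :: "nat \<Rightarrow> 'a::field \<Rightarrow> 'a set" where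
  "ell q e = {x \<in> calP q. x ^ (q + 1) + (e ^ (q^2 + q + 2) + e ^ (q + 1)) * x + e ^ 2 = 0}"

end

theory Submission
  imports Defs "HOL-Number_Theory.Number_Theory"
begin

definition LL :: "nat \<Rightarrow> 'a::field \<Rightarrow> 'a \<Rightarrow> 'a" where
  "LL q e x = x ^ (q + 1) + (e ^ (q^2 + q + 2) + e ^ (q + 1)) * x + e ^ 2"

lemma sq_add2:
  fixes a b :: "'a::field"
  assumes "(2::'a) = 0"
  shows "(a + b) ^ 2 = a ^ 2 + b ^ 2"
proof -
  have "(a + b) ^ 2 = a ^ 2 + b ^ 2 + 2 * a * b" by (simp add: power2_eq_square algebra_simps)
  then show ?thesis using assms by simp
qed

lemma pow2k_add:
  fixes a b :: "'a::field"
  assumes "(2::'a) = 0"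
  shows "(a + b) ^ (2 ^ k) = a ^ (2 ^ k) + b ^ (2 ^ k)"
proof (induction k)
  case 0
  then show ?case by simp
next
  case (Suc k)
  have "(a + b) ^ (2 ^ Suc k) = ((a + b) ^ (2 ^ k)) ^ 2"
    by (simp add: power_mult[symmetric] mult.commute)
  also have "\<dots> = (a ^ (2 ^ k) + b ^ (2 ^ k)) ^ 2" using Suc by simp
  also have "\<dots> = (a ^ (2 ^ k)) ^ 2 + (b ^ (2 ^ k)) ^ 2" using sq_add2[OF assms] by simp
  also have "\<dots> = a ^ (2 ^ Suc k) + b ^ (2 ^ Suc k)"
    by (simp add: power_mult[symmetric] mult.commute)
  finally show ?case .
qed

lemma pow_comm: "((a::'a::field) ^ n) ^ k = (a ^ k) ^ n"
  by (simp add: power_mult[symmetric] mult.commute)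

lemma LL_frob:
  fixes e x :: "'a::field"
  assumes "(2::'a) = 0"
  shows "(LL q e x) ^ (2 ^ k) = LL q (e ^ (2 ^ k)) (x ^ (2 ^ k))"
  unfolding LL_def
  by (simp add: pow2k_add[OF assms] power_mult_distrib pow_comm)

lemma alg_id:
  fixes x U P1 a V A1 A2 P2 :: "'a::field"
  assumes xU: "x * U = P1" and aV: "a^2 * V = A1 * a"
  shows "x * ((A1 * a) ^ 2 + (U + P2 * P1) * a ^ 2 + P1 ^ 2)
     + 2 * (A2 * A1 * a^2 * x * P1 + A1 * a * x * P1) =
     P1 * (x * P1 + (A2 * A1 * a^2 + A1 * a) * x + a ^ 2)
     + a ^ 2 * x * (P2 * P1 + (V + A2 * A1) * P1 + A1 ^ 2)"
proof -
  have h1: "x * ((A1 * a) ^ 2 + (U + P2 * P1) * a ^ 2 + P1 ^ 2)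
     + 2 * (A2 * A1 * a^2 * x * P1 + A1 * a * x * P1) = 
     x*(A1*a)^2 + (x*U)*a^2 + x*P2*P1*a^2 + x*P1^2 + 2 * (A2 * A1 * a^2 * x * P1 + A1 * a * x * P1)"
    by (simp add: algebra_simps)
  have h2: "P1 * (x * P1 + (A2 * A1 * a^2 + A1 * a) * x + a ^ 2)
     + a ^ 2 * x * (P2 * P1 + (V + A2 * A1) * P1 + A1 ^ 2) = 
     P1 * (x * P1 + (A2 * A1 * a^2 + A1 * a) * x + a ^ 2)
     + x * (P2 * P1 * a^2 + (a^2 * V) * P1 + a^2 * A2 * A1 * P1 + a^2 * A1 ^ 2)"
    by (simp add: algebra_simps)
  have h3: "x*(A1*a)^2 + P1*a^2 + x*P2*P1*a^2 + x*P1^2 + 2 * (A2 * A1 * a^2 * x * P1 + A1 * a * x * P1)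
     = P1 * (x * P1 + (A2 * A1 * a^2 + A1 * a) * x + a ^ 2)
     + x * (P2 * P1 * a^2 + (A1 * a) * P1 + a^2 * A2 * A1 * P1 + a^2 * A1 ^ 2)"
    by (simp add: algebra_simps power2_eq_square)
  show ?thesis unfolding h1 h2 xU aV by (rule h3)
qed

lemma ident:
  fixes a x y :: "'a::field"
  assumes two: "(2::'a) = 0" and q: "q = 2 ^ m"
    and an: "a ^ (q^3 + q^2 + q + 1) = 1" and xn: "x ^ (q^3 + q^2 + q + 1) = 1"
    and y: "y ^ 2 = x ^ q"
  shows "x * (LL q y a) ^ 2 = x ^ q * LL q a x + a ^ 2 * x * (LL q a x) ^ q"
proof -
  define P1 where "P1 = x ^ q"
  define P2 where "P2 = x ^ (q^2)"
  define U where "U = x ^ (q^3 + q^2 + 2*q)"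
  define A1 where "A1 = a ^ q"
  define A2 where "A2 = a ^ (q^2)"
  define V where "V = a ^ (q^3 + q^2 + 2*q)"
  have xU: "x * U = P1"
  proof -
    have "U = x ^ (q^3 + q^2 + q) * x ^ q" unfolding U_def
      by (simp add: power_add[symmetric] mult_2 add_ac)
    then have "x * U = x ^ (q^3 + q^2 + q + 1) * x ^ q"
      by (simp add: mult.assoc[symmetric])
    also have "\<dots> = x ^ q" using xn by simp
    finally show ?thesis unfolding P1_def .
  qed
  have aV: "a ^ 2 * V = A1 * a"
  proof -
    have ex: "2 + (q^3 + q^2 + 2*q) = (q^3 + q^2 + q + 1) + (q + 1)" by simp
    have "a ^ 2 * V = a ^ (2 + (q^3 + q^2 + 2*q))" unfolding V_def by (simp only: power_add)
    also have "\<dots> = a ^ (q^3 + q^2 + q + 1) * a ^ (q + 1)" by (simp only: ex power_add)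
    also have "a ^ (q + 1) = a ^ q * a" by (simp only: power_add power_one_right)
    finally have "a ^ 2 * V = a ^ (q^3 + q^2 + q + 1) * (a ^ q * a)" .
    then show ?thesis using an A1_def by simp
  qed
  have ex3: "q * (q^2 + q + 2) = q^3 + q^2 + 2*q"
    by (simp add: algebra_simps power2_eq_square power3_eq_cube)
  have L1: "(LL q y a) ^ 2 = (A1 * a) ^ 2 + (U + P2 * P1) * a ^ 2 + P1 ^ 2"
  proof -
    have "(LL q y a) ^ 2 = LL q (y ^ 2) (a ^ 2)" using LL_frob[OF two, of q y a 1] by simp
    also have "\<dots> = (a^2) ^ (q+1) + ((x^q) ^ (q^2 + q + 2) + (x^q) ^ (q+1)) * a^2 + (x^q)^2"
      unfolding LL_def y ..
    also have "(a^2) ^ (q+1) = (A1 * a) ^ 2"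
    proof -
      have "A1 * a = a ^ (q + 1)" unfolding A1_def by (simp only: power_add power_one_right)
      then show ?thesis by (simp only: pow_comm)
    qed
    also have "(x^q) ^ (q^2 + q + 2) = U" unfolding U_def
      by (simp only: power_mult[symmetric] ex3)
    also have "(x^q) ^ (q+1) = P2 * P1" unfolding P1_def P2_def
      by (simp add: power_mult[symmetric] power2_eq_square algebra_simps power_add)
    finally show ?thesis unfolding P1_def .
  qed
  have L2: "LL q a x = x * P1 + (A2 * A1 * a^2 + A1 * a) * x + a ^ 2"
  proof -
    have "x ^ (q + 1) = x * P1" unfolding P1_def by (simp only: power_add power_one_right mult.commute)
    moreover have "a ^ (q^2 + q + 2) = A2 * A1 * a^2" unfolding A1_def A2_def by (simp only: power_add)
    moreover have "a ^ (q + 1) = A1 * a" unfolding A1_def by (simp only: power_add power_one_right)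
    ultimately show ?thesis unfolding LL_def by (simp only:)
  qed
  have L3: "(LL q a x) ^ q = P2 * P1 + (V + A2 * A1) * P1 + A1 ^ 2"
  proof -
    have "(LL q a x) ^ q = LL q (a ^ q) (x ^ q)" using LL_frob[OF two, of q a x m] q by simp
    also have "\<dots> = (x^q) ^ (q+1) + ((a^q) ^ (q^2 + q + 2) + (a^q) ^ (q+1)) * x^q + (a^q)^2"
      unfolding LL_def ..
    also have "(a^q) ^ (q^2 + q + 2) = V" unfolding V_def
      by (simp only: power_mult[symmetric] ex3)
    also have "(a^q) ^ (q+1) = A2 * A1" unfolding A1_def A2_def
      by (simp add: power_mult[symmetric] power2_eq_square algebra_simps power_add)
    also have "(x^q) ^ (q+1) = P2 * P1" unfolding P1_def P2_def
      by (simp add: power_mult[symmetric] power2_eq_square algebra_simps power_add)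
    finally show ?thesis unfolding P1_def A1_def .
  qed
  have alg: "x * ((A1 * a) ^ 2 + (U + P2 * P1) * a ^ 2 + P1 ^ 2)
     + 2 * (A2 * A1 * a^2 * x * P1 + A1 * a * x * P1) =
     P1 * (x * P1 + (A2 * A1 * a^2 + A1 * a) * x + a ^ 2)
     + a ^ 2 * x * (P2 * P1 + (V + A2 * A1) * P1 + A1 ^ 2)"
    by (rule alg_id[OF xU aV])
  have L3': "(x * P1 + (A2 * A1 * a^2 + A1 * a) * x + a ^ 2) ^ q = P2 * P1 + (V + A2 * A1) * P1 + A1 ^ 2"
    using L3 L2 by simp
  have "x * (LL q y a) ^ 2 + 2 * (A2 * A1 * a^2 * x * P1 + A1 * a * x * P1)
     = x ^ q * LL q a x + a ^ 2 * x * (LL q a x) ^ q"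
    unfolding L1 L2 L3' P1_def[symmetric] by (rule alg)
  then show ?thesis using two by simp
qed

theorem mainTheorem7:
  fixes m :: nat and x e :: "'a::{field,finite}"
  assumes "m \<ge> 1"
    and "card (UNIV :: 'a set) = (2 ^ m) ^ 4"
    and "x \<in> calP (2 ^ m)" and "e \<in> calP (2 ^ m)"
  shows "x \<in> ell (2 ^ m) e \<longleftrightarrow> e \<in> ell (2 ^ m) (x ^ (2 ^ (m - 1)))"
proof -
  define q where "q = (2::nat) ^ m"
  define N where "N = q^3 + q^2 + q + 1"
  have two: "(2::'a) = 0"
  proof -
    have fin: "finite (UNIV :: 'a set)" by simp
    have pos: "CHAR('a) > 0" using finite_imp_CHAR_pos[OF fin] .
    have pr: "prime CHAR('a)" using prime_CHAR_semidom[OF pos] .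
    have "CHAR('a) dvd card (UNIV :: 'a set)" by (rule CHAR_dvd_CARD)
    then have "CHAR('a) dvd 2 ^ (m * 4)" using assms(2) by (simp add: power_mult)
    then have "CHAR('a) dvd 2" using pr prime_dvd_power by blast
    then have "CHAR('a) \<le> 2" by (simp add: dvd_imp_le)
    moreover have "CHAR('a) > 1" using pr prime_gt_1_nat by blast
    ultimately have "CHAR('a) = 2" by simp
    then have "of_nat 2 = (0::'a)" by (metis of_nat_CHAR)
    then show ?thesis by simp
  qed
  have qpos: "q > 0" unfolding q_def by simp
  have xn: "x ^ N = 1" using assms(3) unfolding calP_def N_def q_def by simp
  have en: "e ^ N = 1" using assms(4) unfolding calP_def N_def q_def by simp
  have x0: "x \<noteq> 0" using xn unfolding N_def by (metis power_0_Suc zero_neq_one add.commute plus_1_eq_Suc)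
  have e0: "e \<noteq> 0" using en unfolding N_def by (metis power_0_Suc zero_neq_one add.commute plus_1_eq_Suc)
  define y where "y = x ^ (2 ^ (m - 1))"
  define e' where "e' = e ^ (2 ^ (m - 1))"
  have m2: "(2::nat) ^ (m - 1) * 2 = q" unfolding q_def using assms(1)
    by (metis Suc_diff_1 less_le_trans less_one not_less power_Suc2 zero_less_one)
  have y2: "y ^ 2 = x ^ q" by (simp only: y_def power_mult[symmetric] m2)
  have e2: "e' ^ 2 = e ^ q" by (simp only: e'_def power_mult[symmetric] m2)
  have yn: "y ^ N = 1" unfolding y_def using xn by (metis pow_comm power_one)
  have yP: "y \<in> calP (2^m)" using yn unfolding calP_def N_def q_def by simp
  have id1: "x * (LL q y e) ^ 2 = x ^ q * LL q e x + e ^ 2 * x * (LL q e x) ^ q"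
    using ident[OF two q_def, of e x y] en xn y2 unfolding N_def by blast
  have id2: "e * (LL q e' y) ^ 2 = e ^ q * LL q y e + y ^ 2 * e * (LL q y e) ^ q"
    using ident[OF two q_def, of y e e'] en yn e2 unfolding N_def by blast
  have fr: "(LL q e' y) ^ 2 = (LL q e x) ^ q"
  proof -
    have "(LL q e' y) ^ 2 = LL q (e' ^ 2) (y ^ 2)" using LL_frob[OF two, of q e' y 1] by simp
    also have "\<dots> = LL q (e ^ (2^m)) (x ^ (2^m))" unfolding e2 y2 q_def ..
    also have "\<dots> = (LL q e x) ^ q" using LL_frob[OF two, of q e x m] q_def by simp
    finally show ?thesis .
  qed
  have m1: "x \<in> ell (2 ^ m) e \<longleftrightarrow> LL q e x = 0"
    using assms(3) unfolding ell_def LL_def q_def by simp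
  have m2': "e \<in> ell (2 ^ m) (x ^ (2 ^ (m - 1))) \<longleftrightarrow> LL q y e = 0"
    using assms(4) unfolding ell_def LL_def q_def y_def by simp
  show ?thesis unfolding m1 m2'
  proof
    assume "LL q e x = 0"
    then have "x * (LL q y e) ^ 2 = 0" using id1 qpos by (simp add: power_0_left)
    then show "LL q y e = 0" using x0 by simp
  next
    assume "LL q y e = 0"
    then have "e * (LL q e x) ^ q = 0" using id2 fr qpos by (simp add: power_0_left)
    then show "LL q e x = 0" using e0 by simp
  qed
qed

end
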